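(* (1) There exists a function $r:[\omega]^\omega\to[\omega]^\omega$ such that for every $x,z\in[\omega]^\omega$ there is $y\in[x]^\omega$ with $r(y)=z$. (2) There exists a function $r:[\omega]^\omega\to 2^{\aleph_0}$ such that for every $x\in[\omega]^\omega$ and every $\beta<2^{\aleph_0}$ there is $y\in[x]^\omega$ with $r(y)=\beta$. (3) For every infinite cardinal $\lambda$ there is a function $r:[\lambda]^\omega\to 2^{\aleph_0}$ such that for every $x\in[\lambda]^\omega$ and every $\beta<2^{\aleph_0}$ there is $y\in[x]^\omega$ with $r(y)=\beta$ (and likewise with $[\omega]^\omega$ as target in place of $2^{\aleph_0}$).
   Context: Work in ZFC. For a set $X$, $[X]^\omega$ denotes the set of countably infinite subsets of $X$. *)

theory Defs
  imports Main "HOL-Library.Countable_Set"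
begin

definition ctbl_inf_subsets :: "'a set \<Rightarrow> 'a set set" where
  "ctbl_inf_subsets X = {y. y \<subseteq> X \<and> countable y \<and> infinite y}"

end

theory Submission
  imports Defs
begin
unbundle cardinal_syntax



lemma inj_choice:
  assumes big: "\<forall>i\<in>I. |I| \<le>o |S i|"
  shows "\<exists>g. inj_on g I \<and> (\<forall>i\<in>I. g i \<in> S i)"
proof -
  let ?r = "|I|"
  let ?R = "?r - Id"
  have WO: "Well_order ?r" by (rule card_of_Well_order)
  have wfR: "wf ?R" using WO by (simp add: well_order_on_def)
  have FI: "Field ?r = I" by (rule Field_card_of)
  define F where "F = (\<lambda>f i. SOME s. s \<in> S i \<and> s \<notin> f ` {b. (b,i) \<in> ?R})"
  define g where "g = wfrec ?R F"
  have us: "{b. (b,i) \<in> ?R} = underS ?r i" for i by (auto simp: underS_def)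
  have key: "g i \<in> S i \<and> g i \<notin> g ` underS ?r i" if iI: "i \<in> I" for i
  proof -
    have eq: "g i = F (cut g ?R i) i" unfolding g_def by (rule wfrec[OF wfR])
    have cuteq: "cut g ?R i ` {b. (b,i) \<in> ?R} = g ` underS ?r i"
      by (auto simp: cut_def us[symmetric] image_def)
    have "|g ` underS ?r i| \<le>o |underS ?r i|" by (rule card_of_image)
    moreover have "|underS ?r i| <o ?r"
      using card_of_underS[OF card_of_Card_order, of i I] iI FI by simp
    ultimately have lt: "|g ` underS ?r i| <o |S i|"
      using big iI ordLeq_ordLess_trans ordLess_ordLeq_trans by blast
    have "\<exists>s. s \<in> S i \<and> s \<notin> g ` underS ?r i"
    proof (rule ccontr)
      assume "\<not> ?thesis"
      hence "S i \<subseteq> g ` underS ?r i" by blast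
      hence "|S i| \<le>o |g ` underS ?r i|" by (rule card_of_mono1)
      thus False using lt not_ordLess_ordLeq by blast
    qed
    hence "F (cut g ?R i) i \<in> S i \<and> F (cut g ?R i) i \<notin> g ` underS ?r i"
      unfolding F_def cuteq by (rule someI_ex)
    thus ?thesis using eq by simp
  qed
  have "inj_on g I"
  proof (rule inj_onI)
    fix i j assume i: "i \<in> I" and j: "j \<in> I" and e: "g i = g j"
    show "i = j"
    proof (rule ccontr)
      assume ne: "i \<noteq> j"
      have "(i,j) \<in> ?r \<or> (j,i) \<in> ?r" using WO i j FI
        by (metis wo_rel.TOTALS wo_rel_def)
      thus False
      proof
        assume "(i,j) \<in> ?r"
        hence "i \<in> underS ?r j" using ne by (auto simp: underS_def)
        thus False using key[OF j] e by (metis image_eqI)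
      next
        assume "(j,i) \<in> ?r"
        hence "j \<in> underS ?r i" using ne by (auto simp: underS_def)
        thus False using key[OF i] e by (metis image_eqI)
      qed
    qed
  qed
  thus ?thesis using key by blast
qed



lemma nat_core: "\<exists>r0 :: nat set \<Rightarrow> nat set. \<forall>x. infinite x \<longrightarrow> (\<forall>\<beta>. \<exists>y\<subseteq>x. infinite y \<and> r0 y = \<beta>)"
proof -
  let ?I = "{x::nat set. infinite x} \<times> (UNIV :: nat set set)"
  define S where "S = (\<lambda>p::nat set \<times> nat set. {y. y \<subseteq> fst p \<and> infinite y})"
  have big: "\<forall>i\<in>?I. |?I| \<le>o |S i|"
  proof
    fix i assume i: "i \<in> ?I"
    have "|?I| \<le>o |(UNIV :: nat set set) \<times> (UNIV :: nat set set)|"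
      by (rule card_of_mono1) auto
    moreover have "|(UNIV :: nat set set) \<times> (UNIV :: nat set set)| =o |UNIV :: nat set set|"
      by (rule card_of_Times_same_infinite) (metis Pow_UNIV finite_Pow_iff infinite_UNIV_nat)
    moreover have "|UNIV :: nat set set| \<le>o |S i|"
    proof -
      from i have "infinite (fst i)" by auto
      then obtain f :: "nat \<Rightarrow> nat" where f: "inj f" "range f \<subseteq> fst i"
        using infinite_countable_subset[of "fst i"] by blast
      define G where "G = (\<lambda>\<beta>::nat set. f ` ((\<lambda>n. 2*n) ` \<beta> \<union> range (\<lambda>n. 2*n+1)))"
      have "inj G"
      proof (rule injI)
        fix a b assume "G a = G b"
        hence "(\<lambda>n. 2*n) ` a \<union> range (\<lambda>n. 2*n+1) = (\<lambda>n. 2*n) ` b \<union> range (\<lambda>n. 2*n+1)"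
          unfolding G_def using f(1) by (simp add: inj_image_eq_iff)
        moreover have odd: "\<And>n m::nat. 2*n \<noteq> 2*m+1" by presburger
        have mem: "\<And>A n. (2*n \<in> (\<lambda>n. 2*n) ` A \<union> range (\<lambda>n::nat. 2*n+1)) = (n \<in> A)"
          using odd by auto
        ultimately show "a = b" by (metis mem set_eqI)
      qed
      moreover have "G ` UNIV \<subseteq> S i"
      proof
        fix y assume "y \<in> G ` UNIV"
        then obtain \<beta> where y: "y = G \<beta>" by auto
        have "infinite (range (\<lambda>n::nat. 2*n+1))"
          by (rule range_inj_infinite) (auto simp: inj_def)
        hence "infinite ((\<lambda>n. 2*n) ` \<beta> \<union> range (\<lambda>n::nat. 2*n+1))" by auto
        hence "infinite y" unfolding y G_def using f(1)
          by (metis finite_imageD inj_on_subset subset_UNIV)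
        moreover have "y \<subseteq> fst i" using f(2) unfolding y G_def by auto
        ultimately show "y \<in> S i" by (simp add: S_def)
      qed
      ultimately show ?thesis using card_of_ordLeq by blast
    qed
    ultimately show "|?I| \<le>o |S i|"
      using ordLeq_ordIso_trans ordLeq_transitive by blast
  qed
  obtain g where g: "inj_on g ?I" "\<forall>i\<in>?I. g i \<in> S i" using inj_choice[OF big] by blast
  define r0 where "r0 = (\<lambda>y. snd (the_inv_into ?I g y))"
  show ?thesis
  proof (rule exI[of _ r0], intro allI impI)
    fix x :: "nat set" and \<beta> assume x: "infinite x"
    have xi: "(x,\<beta>) \<in> ?I" using x by simp
    have "g (x,\<beta>) \<in> S (x,\<beta>)" using g(2) xi by blast
    moreover have "r0 (g (x,\<beta>)) = \<beta>" unfolding r0_def using the_inv_into_f_f[OF g(1) xi] by simp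
    ultimately show "\<exists>y\<subseteq>x. infinite y \<and> r0 y = \<beta>" by (auto simp: S_def)
  qed
qed


lemma gen_core: "\<exists>r :: 'b set \<Rightarrow> nat set. \<forall>x. countable x \<and> infinite x \<longrightarrow>
    (\<forall>\<beta>. \<exists>y \<in> ctbl_inf_subsets x. r y = \<beta>)"
proof -
  from nat_core obtain r0 :: "nat set \<Rightarrow> nat set" where
    r0': "\<forall>x. infinite x \<longrightarrow> (\<forall>\<beta>. \<exists>y\<subseteq>x. infinite y \<and> r0 y = \<beta>)" ..
  have r0: "\<exists>y\<subseteq>x. infinite y \<and> r0 y = \<beta>" if "infinite x" for x \<beta>
    using r0' that by simp
  from well_ordering obtain W :: "'b rel" where W0: "Well_order W \<and> Field W = UNIV" ..
  have W: "Well_order W" "Field W = UNIV" using W0 by auto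
  interpret wo: wo_rel W using W(1) by (simp add: wo_rel_def)
  have tot: "(a,b) \<in> W \<or> (b,a) \<in> W" for a b
    using wo.TOTALS W(2) by simp
  have refl: "(a,a) \<in> W" for a using tot by blast
  have trans: "(a,b) \<in> W \<Longrightarrow> (b,c) \<in> W \<Longrightarrow> (a,c) \<in> W" for a b c
    using wo.TRANS by (rule transD)
  have anti: "(a,b) \<in> W \<Longrightarrow> (b,a) \<in> W \<Longrightarrow> a = b" for a b
    using wo.ANTISYM by (rule antisymD)
  have wfW: "wf (W - Id)" using W by (simp add: well_order_on_def)
  define lt where "lt = (\<lambda>a b. (a,b) \<in> W \<and> a \<noteq> b)"
  define D where "D = (\<lambda>y. {a. \<exists>b\<in>y. lt a b})"
  define sD where "sD = (\<lambda>E. SOME s::nat \<Rightarrow> 'b. E = {a. \<exists>n. lt a (s n)} \<and> range s \<subseteq> E)"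
  define h where "h = (\<lambda>E a. LEAST n. lt a (sD E n))"
  define r where "r = (\<lambda>y. r0 (h (D y) ` y))"
  show ?thesis
  proof (rule exI[of _ r], intro allI impI)
    fix x :: "'b set" and \<beta> assume x: "countable x \<and> infinite x"
    define x' where "x' = {b\<in>x. finite {c\<in>x. (c,b) \<in> W}}"
    have x'x: "x' \<subseteq> x" by (auto simp: x'_def)
    have fin': "finite {c\<in>x'. (c,b) \<in> W}" if "b \<in> x'" for b
      using that unfolding x'_def by (auto elim: rev_finite_subset)
    have infx': "infinite x'"
    proof
      assume fx': "finite x'"
      have "x - x' \<noteq> {}"
      proof
        assume "x - x' = {}"
        hence "x \<subseteq> x'" by blast
        thus False using x fx' finite_subset by blast
      qed
      then obtain m0 where m0: "m0 \<in> x - x'" by blast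
      have "\<exists>z\<in>x - x'. \<forall>y. (y, z) \<in> W - Id \<longrightarrow> y \<notin> x - x'"
        using wf_eq_minimal[THEN iffD1, OF wfW, rule_format, OF m0] .
      then obtain m where m: "m \<in> x - x'" and mmin: "\<And>c. (c,m) \<in> W - Id \<Longrightarrow> c \<notin> x - x'"
        by blast
      have "{c\<in>x. (c,m) \<in> W} \<subseteq> insert m x'" using mmin by auto
      hence "finite {c\<in>x. (c,m) \<in> W}" using fx' by (meson finite_insert finite_subset)
      hence "m \<in> x'" using m by (simp add: x'_def)
      thus False using m by blast
    qed
    have above: "\<exists>b'\<in>y. lt b b'" if yy: "y \<subseteq> x'" "infinite y" "b \<in> x'" for y b
    proof -
      have "\<not> y \<subseteq> {c\<in>x'. (c,b) \<in> W}" using yy fin' finite_subset by blast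
      then obtain b' where b': "b' \<in> y" "(b',b) \<notin> W" using yy by blast
      hence "(b,b') \<in> W" "b \<noteq> b'" using tot refl by auto
      thus ?thesis using b' by (auto simp: lt_def)
    qed
    have Dsub: "D y = D x'" if yy: "y \<subseteq> x'" "infinite y" for y
    proof
      show "D y \<subseteq> D x'" using yy by (auto simp: D_def)
      show "D x' \<subseteq> D y"
      proof
        fix a assume "a \<in> D x'"
        then obtain b where b: "b \<in> x'" "lt a b" by (auto simp: D_def)
        obtain b' where b': "b' \<in> y" "lt b b'" using above[OF yy b(1)] by blast
        have "(a,b') \<in> W" using b(2) b'(2) trans by (auto simp: lt_def)
        moreover have "a \<noteq> b'" using b(2) b'(2) anti by (auto simp: lt_def)
        ultimately show "a \<in> D y" using b' by (auto simp: D_def lt_def)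
      qed
    qed
    have x'D: "x' \<subseteq> D x'" using above[OF subset_refl infx'] by (auto simp: D_def)
    define s0 where "s0 = sD (D x')"
    have s0: "D x' = {a. \<exists>n. lt a (s0 n)} \<and> range s0 \<subseteq> D x'"
    proof -
      have cx': "countable x'" using x x'x countable_subset by blast
      have ne: "x' \<noteq> {}" using infx' by auto
      let ?f = "from_nat_into x'"
      have rf: "range ?f = x'" using range_from_nat_into[OF ne cx'] .
      have mem: "b \<in> x' \<longleftrightarrow> (\<exists>n. b = ?f n)" for b
      proof
        assume "b \<in> x'" hence "b \<in> range ?f" by (simp only: rf)
        thus "\<exists>n. b = ?f n" by blast
      next
        assume "\<exists>n. b = ?f n" hence "b \<in> range ?f" by blast
        thus "b \<in> x'" by (simp only: rf)
      qed
      have e1: "D x' = {a. \<exists>n. lt a (?f n)}" unfolding D_def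
      proof (rule Collect_cong)
        fix a show "(\<exists>b\<in>x'. lt a b) = (\<exists>n. lt a (?f n))" by (auto simp: Bex_def mem)
      qed
      have e2: "range ?f \<subseteq> D x'" using rf x'D by simp
      have "D x' = {a. \<exists>n. lt a (?f n)} \<and> range ?f \<subseteq> D x'" using e1 e2 by blast
      thus ?thesis unfolding s0_def sD_def
        by (rule someI[where P="\<lambda>s. D x' = {a. \<exists>n. lt a (s n)} \<and> range s \<subseteq> D x'"])
    qed
    define hh where "hh = h (D x')"
    have hh1: "lt a (s0 (hh a))" if "a \<in> x'" for a
    proof -
      have "\<exists>n. lt a (s0 n)" using s0 x'D that by blast
      thus ?thesis unfolding hh_def h_def s0_def[symmetric] by (rule LeastI_ex)
    qed
    have hh2: "hh a \<le> n" if "lt a (s0 n)" for a n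
      unfolding hh_def h_def s0_def[symmetric] using that by (rule Least_le)
    have finlev: "finite {a\<in>x'. hh a \<le> k}" for k
    proof -
      have "{a\<in>x'. hh a \<le> k} \<subseteq> (\<Union>j\<le>k. {a\<in>x'. lt a (s0 j)})"
        using hh1 by fastforce
      moreover have "finite {a\<in>x'. lt a (s0 j)}" for j
      proof -
        have "s0 j \<in> D x'" using s0 by blast
        then obtain b where b: "b \<in> x'" "lt (s0 j) b" by (auto simp: D_def)
        have "{a\<in>x'. lt a (s0 j)} \<subseteq> {c\<in>x'. (c,b) \<in> W}"
          using b trans by (auto simp: lt_def)
        thus ?thesis using fin'[OF b(1)] finite_subset by blast
      qed
      ultimately show ?thesis by (meson finite_UN_I finite_atMost finite_subset)
    qed
    have infimg: "infinite (hh ` x')"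
    proof
      assume f: "finite (hh ` x')"
      define k where "k = Max (hh ` x')"
      have "x' \<subseteq> {a\<in>x'. hh a \<le> k}" using f by (auto simp: k_def)
      thus False using finlev infx' finite_subset by blast
    qed
    obtain z where z: "z \<subseteq> hh ` x'" "infinite z" "r0 z = \<beta>" using r0[OF infimg] by blast
    define pick where "pick = (\<lambda>k. SOME a. a \<in> x' \<and> hh a = k)"
    have pick: "pick k \<in> x' \<and> hh (pick k) = k" if "k \<in> z" for k
    proof -
      have "\<exists>a. a \<in> x' \<and> hh a = k" using z(1) that by blast
      thus ?thesis unfolding pick_def by (rule someI_ex)
    qed
    define y where "y = pick ` z"
    have yx': "y \<subseteq> x'" using pick by (auto simp: y_def)
    have "(\<lambda>k. hh (pick k)) ` z = (\<lambda>k. k) ` z" by (rule image_cong) (auto simp: pick)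
    hence hy: "hh ` y = z" unfolding y_def image_image by simp
    have infy: "infinite y"
    proof
      assume "finite y" hence "finite (hh ` y)" by (rule finite_imageI)
      thus False using hy z(2) by simp
    qed
    have yx: "y \<subseteq> x" using yx' x'x by (rule subset_trans)
    have "countable y" using countable_subset[OF yx] x by simp
    hence yin: "y \<in> ctbl_inf_subsets x" using yx infy by (simp add: ctbl_inf_subsets_def)
    have "r y = \<beta>" unfolding r_def using Dsub[OF yx' infy] hy z(3) by (simp add: hh_def)
    thus "\<exists>y \<in> ctbl_inf_subsets x. r y = \<beta>" using yin by blast
  qed
qed

lemma to_inf:
  fixes r :: "'b set \<Rightarrow> nat set" and L :: "'b set"
  assumes R: "\<forall>x. countable x \<and> infinite x \<longrightarrow> (\<forall>\<beta>. \<exists>y\<in>ctbl_inf_subsets x. r y = \<beta>)"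
  shows "\<exists>r'::'b set \<Rightarrow> nat set. (\<forall>y\<in>ctbl_inf_subsets L. r' y \<in> ctbl_inf_subsets UNIV) \<and>
     (\<forall>x\<in>ctbl_inf_subsets L. \<forall>z\<in>ctbl_inf_subsets UNIV. \<exists>y\<in>ctbl_inf_subsets x. r' y = z)"
proof (rule exI[of _ "\<lambda>y. if infinite (r y) then r y else UNIV"], intro conjI ballI)
  fix y assume "y \<in> ctbl_inf_subsets L"
  show "(if infinite (r y) then r y else UNIV) \<in> ctbl_inf_subsets (UNIV::nat set)"
    by (simp add: ctbl_inf_subsets_def countableI_type)
next
  fix x z assume x: "x \<in> ctbl_inf_subsets L" and z: "z \<in> ctbl_inf_subsets (UNIV::nat set)"
  have "countable x \<and> infinite x" using x by (simp add: ctbl_inf_subsets_def)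
  then obtain y where y: "y \<in> ctbl_inf_subsets x" "r y = z" using R by blast
  have "infinite z" using z by (simp add: ctbl_inf_subsets_def)
  thus "\<exists>y\<in>ctbl_inf_subsets x. (if infinite (r y) then r y else UNIV) = z" using y by auto
qed

lemma cone_ex:
  fixes r :: "'b set \<Rightarrow> nat set" and L :: "'b set"
  assumes R: "\<forall>x. countable x \<and> infinite x \<longrightarrow> (\<forall>\<beta>. \<exists>y\<in>ctbl_inf_subsets x. r y = \<beta>)"
  shows "\<forall>x\<in>ctbl_inf_subsets L. \<forall>\<beta>. \<exists>y\<in>ctbl_inf_subsets x. r y = \<beta>"
  using R by (simp add: ctbl_inf_subsets_def)

theorem lemma2p1:
  shows
  "(\<exists>r :: nat set \<Rightarrow> nat set.
      (\<forall>y \<in> ctbl_inf_subsets (UNIV :: nat set). r y \<in> ctbl_inf_subsets (UNIV :: nat set)) \<and>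
      (\<forall>x \<in> ctbl_inf_subsets (UNIV :: nat set). \<forall>z \<in> ctbl_inf_subsets (UNIV :: nat set).
         \<exists>y \<in> ctbl_inf_subsets x. r y = z))
   \<and>
   (\<exists>r :: nat set \<Rightarrow> nat set.
      \<forall>x \<in> ctbl_inf_subsets (UNIV :: nat set). \<forall>\<beta> :: nat set.
         \<exists>y \<in> ctbl_inf_subsets x. r y = \<beta>)
   \<and>
   (\<forall>L :: 'a set. infinite L \<longrightarrow>
      (\<exists>r :: 'a set \<Rightarrow> nat set.
         \<forall>x \<in> ctbl_inf_subsets L. \<forall>\<beta> :: nat set.
           \<exists>y \<in> ctbl_inf_subsets x. r y = \<beta>)
      \<and>
      (\<exists>r :: 'a set \<Rightarrow> nat set.
         (\<forall>y \<in> ctbl_inf_subsets L. r y \<in> ctbl_inf_subsets (UNIV :: nat set)) \<and>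
         (\<forall>x \<in> ctbl_inf_subsets L. \<forall>z \<in> ctbl_inf_subsets (UNIV :: nat set).
            \<exists>y \<in> ctbl_inf_subsets x. r y = z)))"
  proof -
  obtain rn :: "nat set \<Rightarrow> nat set" where rn:
    "\<forall>x. countable x \<and> infinite x \<longrightarrow> (\<forall>\<beta>. \<exists>y\<in>ctbl_inf_subsets x. rn y = \<beta>)"
    using gen_core[where 'b=nat] by (elim exE)
  have P1: "\<exists>r :: nat set \<Rightarrow> nat set.
      (\<forall>y \<in> ctbl_inf_subsets (UNIV :: nat set). r y \<in> ctbl_inf_subsets (UNIV :: nat set)) \<and>
      (\<forall>x \<in> ctbl_inf_subsets (UNIV :: nat set). \<forall>z \<in> ctbl_inf_subsets (UNIV :: nat set).
         \<exists>y \<in> ctbl_inf_subsets x. r y = z)" by (rule to_inf[OF rn])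
  have P2: "\<exists>r :: nat set \<Rightarrow> nat set.
      \<forall>x \<in> ctbl_inf_subsets (UNIV :: nat set). \<forall>\<beta> :: nat set.
         \<exists>y \<in> ctbl_inf_subsets x. r y = \<beta>" by (rule exI[of _ rn], rule cone_ex[OF rn])
  obtain ra :: "'a set \<Rightarrow> nat set" where ra:
    "\<forall>x. countable x \<and> infinite x \<longrightarrow> (\<forall>\<beta>. \<exists>y\<in>ctbl_inf_subsets x. ra y = \<beta>)"
    using gen_core[where 'b='a] by (elim exE)
  have P3: "\<forall>L :: 'a set. infinite L \<longrightarrow>
      (\<exists>r :: 'a set \<Rightarrow> nat set.
         \<forall>x \<in> ctbl_inf_subsets L. \<forall>\<beta> :: nat set.
           \<exists>y \<in> ctbl_inf_subsets x. r y = \<beta>)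
      \<and>
      (\<exists>r :: 'a set \<Rightarrow> nat set.
         (\<forall>y \<in> ctbl_inf_subsets L. r y \<in> ctbl_inf_subsets (UNIV :: nat set)) \<and>
         (\<forall>x \<in> ctbl_inf_subsets L. \<forall>z \<in> ctbl_inf_subsets (UNIV :: nat set).
            \<exists>y \<in> ctbl_inf_subsets x. r y = z))"
  proof (intro allI impI conjI)
    fix L :: "'a set"
    show "\<exists>r :: 'a set \<Rightarrow> nat set. \<forall>x \<in> ctbl_inf_subsets L. \<forall>\<beta> :: nat set.
           \<exists>y \<in> ctbl_inf_subsets x. r y = \<beta>" by (rule exI[of _ ra], rule cone_ex[OF ra])
    show "\<exists>r :: 'a set \<Rightarrow> nat set.
         (\<forall>y \<in> ctbl_inf_subsets L. r y \<in> ctbl_inf_subsets (UNIV :: nat set)) \<and>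
         (\<forall>x \<in> ctbl_inf_subsets L. \<forall>z \<in> ctbl_inf_subsets (UNIV :: nat set).
            \<exists>y \<in> ctbl_inf_subsets x. r y = z)" by (rule to_inf[OF ra])
  qed
  show ?thesis by (intro conjI P1 P2 P3)
qed

end
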